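(* Let $P$ be a $d$-simplex ($d\ge2$) in general position with vertices $v_1,\dots,v_{d+1}$. Then (i) for every $1\le i\le d$ and every $\sigma\in\mathfrak S_d$ with $\sigma(d)=i$, $\operatorname{sign}(F_i)=\operatorname{sign}\big(\det X(\sigma,d)/\det X(\sigma,d-1)\big)$; (ii) for every $\sigma\in\mathfrak S_d$, $\operatorname{sign}(F_{d+1})=-\operatorname{sign}\big(\det X(\sigma,d)/\det Y(\sigma,d)\big)=-\operatorname{sign}(z(\sigma,d))$.
   Context: Write $v_i=(x_{i,1},\dots,x_{i,d})$ and let $F_i$ be the facet of $P$ opposite $v_i$ (spanned by all vertices except $v_i$). For $\sigma\in\mathfrak S_d$ and $1\le k\le d$, $X(\sigma,k)$ is the $(k+1)\times(k+1)$ matrix whose $r$-th row is $(1,x_{\sigma(r),1},\dots,x_{\sigma(r),k})$ for $r=1,\dots,k$ and whose last row is $(1,x_{d+1,1},\dots,x_{d+1,k})$; $Y(\sigma,k)$ is the $k\times k$ matrix whose $r$-th row is $(1,x_{\sigma(r),1},\dots,x_{\sigma(r),k-1})$, $r=1,\dots,k$; and $z(\sigma,k)=\det X(\sigma,k)/\det Y(\sigma,k)$. $\pi$ forgets the last coordinate, $\pi^{(j)}$ the last $j$ coordinates. $P$ is in general position if for every $0\le k\le d-1$ and every $(k+1)$-subset $U$ of its vertices, $\pi^{(d-k)}(\mathrm{conv}(U))$ is a $k$-simplex. For $y\in\pi(P)$, $n(y,P),p(y,P)$ are the lowest and highest points of $P\cap\pi^{-1}(y)$ in the last coordinate; $NB(P)$,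 $PB(P)$ are the sets of all such points. A facet $F$ is positive ($\operatorname{sign}(F)=+1$) if some relative interior point of $F$ lies in $PB(P)$ and negative ($\operatorname{sign}(F)=-1$) if some relative interior point lies in $NB(P)$. *)

theory Defs
  imports "HOL-Analysis.Analysis"
begin

text \<open>Points of R^n are functions nat => real with coordinates 1..n (all other
  coordinates are 0).  Vertices v 1, ..., v (d+1); x_{i,j} = v i j.\<close>

type_synonym pt = "nat \<Rightarrow> real"

definition in_Rn :: "nat \<Rightarrow> pt \<Rightarrow> bool" where
  "in_Rn n p \<longleftrightarrow> (\<forall>k. (k = 0 \<or> n < k) \<longrightarrow> p k = 0)"

definition convc :: "pt set \<Rightarrow> pt set" where
  "convc S = {x. \<exists>\<mu>. (\<forall>p\<in>S. 0 \<le> \<mu> p) \<and> (\<Sum>p\<in>S. \<mu> p) = 1 \<and>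
                     x = (\<lambda>k. \<Sum>p\<in>S. \<mu> p * p k)}"

definition affhull :: "pt set \<Rightarrow> pt set" where
  "affhull S = {x. \<exists>T \<mu>. finite T \<and> T \<subseteq> S \<and> (\<Sum>p\<in>T. \<mu> p) = 1 \<and>
                        x = (\<lambda>k. \<Sum>p\<in>T. \<mu> p * p k)}"

definition aff_indep :: "pt set \<Rightarrow> bool" where
  "aff_indep S \<longleftrightarrow> (\<forall>\<mu>. (\<Sum>p\<in>S. \<mu> p) = 0 \<and> (\<lambda>k. \<Sum>p\<in>S. \<mu> p * p k) = (\<lambda>k. 0)
                        \<longrightarrow> (\<forall>p\<in>S. \<mu> p = 0))"

definition dist_n :: "nat \<Rightarrow> pt \<Rightarrow> pt \<Rightarrow> real" where
  "dist_n n x y = sqrt (\<Sum>k=1..n. (x k - y k)^2)"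

definition rel_interior_n :: "nat \<Rightarrow> pt set \<Rightarrow> pt set" where
  "rel_interior_n n S = {x\<in>S. \<exists>e>0. \<forall>y\<in>affhull S. dist_n n x y < e \<longrightarrow> y \<in> S}"

text \<open>proj m keeps the first m coordinates (R^n -> R^m); pi^(j) = proj (d - j).\<close>
definition proj :: "nat \<Rightarrow> pt \<Rightarrow> pt" where
  "proj m p = (\<lambda>k. if 1 \<le> k \<and> k \<le> m then p k else 0)"

definition is_simplex :: "nat \<Rightarrow> pt set \<Rightarrow> bool" where
  "is_simplex k S \<longleftrightarrow> (\<exists>W. finite W \<and> card W = k + 1 \<and> (\<forall>w\<in>W. in_Rn k w) \<and>
                           aff_indep W \<and> S = convc W)"

definition vertices :: "nat \<Rightarrow> (nat \<Rightarrow> pt) \<Rightarrow> pt set" where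
  "vertices d v = v ` {1..d+1}"

definition simplexP :: "nat \<Rightarrow> (nat \<Rightarrow> pt) \<Rightarrow> pt set" where
  "simplexP d v = convc (vertices d v)"

definition is_d_simplex :: "nat \<Rightarrow> (nat \<Rightarrow> pt) \<Rightarrow> bool" where
  "is_d_simplex d v \<longleftrightarrow> (\<forall>i\<in>{1..d+1}. in_Rn d (v i)) \<and> inj_on v {1..d+1} \<and>
                          aff_indep (vertices d v)"

definition general_position :: "nat \<Rightarrow> (nat \<Rightarrow> pt) \<Rightarrow> bool" where
  "general_position d v \<longleftrightarrow> (\<forall>k<d. \<forall>U. U \<subseteq> vertices d v \<and> card U = k + 1 \<longrightarrow>
                                   is_simplex k (proj k ` convc U))"

definition NB :: "nat \<Rightarrow> pt set \<Rightarrow> pt set" where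
  "NB d P = {x\<in>P. \<forall>z\<in>P. proj (d - 1) z = proj (d - 1) x \<longrightarrow> x d \<le> z d}"

definition PB :: "nat \<Rightarrow> pt set \<Rightarrow> pt set" where
  "PB d P = {x\<in>P. \<forall>z\<in>P. proj (d - 1) z = proj (d - 1) x \<longrightarrow> z d \<le> x d}"

definition facet :: "nat \<Rightarrow> (nat \<Rightarrow> pt) \<Rightarrow> nat \<Rightarrow> pt set" where
  "facet d v i = convc (v ` ({1..d+1} - {i}))"

definition positive_facet :: "nat \<Rightarrow> pt set \<Rightarrow> pt set \<Rightarrow> bool" where
  "positive_facet d P F \<longleftrightarrow> (\<exists>x\<in>rel_interior_n d F. x \<in> PB d P)"

definition negative_facet :: "nat \<Rightarrow> pt set \<Rightarrow> pt set \<Rightarrow> bool" where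
  "negative_facet d P F \<longleftrightarrow> (\<exists>x\<in>rel_interior_n d F. x \<in> NB d P)"

definition facet_sign_is :: "nat \<Rightarrow> pt set \<Rightarrow> pt set \<Rightarrow> real \<Rightarrow> bool" where
  "facet_sign_is d P F s \<longleftrightarrow> ((positive_facet d P F \<longleftrightarrow> s = 1) \<and> (negative_facet d P F \<longleftrightarrow> s = -1))"

definition detn :: "nat \<Rightarrow> (nat \<Rightarrow> nat \<Rightarrow> real) \<Rightarrow> real" where
  "detn n A = (\<Sum>p | p permutes {0..<n}. of_int (sign p) * (\<Prod>i<n. A i (p i)))"

text \<open>X(sigma,k): (k+1)x(k+1); row r (r<k) is (1, x_{sigma(r+1),1..k}), last row
  (1, x_{d+1,1..k}).  Y(sigma,k): k x k; row r is (1, x_{sigma(r+1),1..k-1}).\<close>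
definition Xmat :: "nat \<Rightarrow> (nat \<Rightarrow> pt) \<Rightarrow> (nat \<Rightarrow> nat) \<Rightarrow> nat \<Rightarrow> nat \<Rightarrow> nat \<Rightarrow> real" where
  "Xmat d v \<sigma> k = (\<lambda>r c. if c = 0 then 1 else if r < k then v (\<sigma> (r + 1)) c else v (d + 1) c)"

definition Ymat :: "(nat \<Rightarrow> pt) \<Rightarrow> (nat \<Rightarrow> nat) \<Rightarrow> nat \<Rightarrow> nat \<Rightarrow> real" where
  "Ymat v \<sigma> = (\<lambda>r c. if c = 0 then 1 else v (\<sigma> (r + 1)) c)"

definition detX :: "nat \<Rightarrow> (nat \<Rightarrow> pt) \<Rightarrow> (nat \<Rightarrow> nat) \<Rightarrow> nat \<Rightarrow> real" where
  "detX d v \<sigma> k = detn (k + 1) (Xmat d v \<sigma> k)"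

definition detY :: "(nat \<Rightarrow> pt) \<Rightarrow> (nat \<Rightarrow> nat) \<Rightarrow> nat \<Rightarrow> real" where
  "detY v \<sigma> k = detn k (Ymat v \<sigma>)"

definition zval :: "nat \<Rightarrow> (nat \<Rightarrow> pt) \<Rightarrow> (nat \<Rightarrow> nat) \<Rightarrow> nat \<Rightarrow> real" where
  "zval d v \<sigma> k = detX d v \<sigma> k / detY v \<sigma> k"

end

theory Submission imports Defs "Jordan_Normal_Form.Determinant" begin
unbundle no vec_syntax

definition bv :: "pt \<Rightarrow> nat \<Rightarrow> real" where "bv y c = (if c = 0 then 1 else y c)"
definition Mof :: "nat \<Rightarrow> (nat \<Rightarrow> pt) \<Rightarrow> real mat" where
  "Mof n p = Matrix.mat (Suc n) (Suc n) (\<lambda>(r,c). bv (p r) c)"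

lemma detn_det: "detn n A = Determinant.det (Matrix.mat n n (\<lambda>(i,j). A i j))"
  unfolding detn_def det_def by (auto intro!: sum.cong prod.cong simp: permutes_def atLeast0LessThan)

lemma aff_fun:
  assumes "finite T" "sum \<mu> T = 1"
  shows "(\<Sum>c<m. bv (\<lambda>k. \<Sum>t\<in>T. \<mu> t * q t k) c * w c) = (\<Sum>t\<in>T. \<mu> t * (\<Sum>c<m. bv (q t) c * w c))"
proof -
  have "bv (\<lambda>k. \<Sum>t\<in>T. \<mu> t * q t k) c = (\<Sum>t\<in>T. \<mu> t * bv (q t) c)" for c
    using assms(2) by (simp add: bv_def)
  then have "(\<Sum>c<m. bv (\<lambda>k. \<Sum>t\<in>T. \<mu> t * q t k) c * w c) = (\<Sum>c<m. \<Sum>t\<in>T. \<mu> t * bv (q t) c * w c)"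
    by (simp add: sum_distrib_right)
  also have "\<dots> = (\<Sum>t\<in>T. \<Sum>c<m. \<mu> t * bv (q t) c * w c)" by (rule sum.swap)
  also have "\<dots> = (\<Sum>t\<in>T. \<mu> t * (\<Sum>c<m. bv (q t) c * w c))" by (simp add: sum_distrib_left mult.assoc)
  finally show ?thesis .
qed

lemma conv_idx:
  assumes "inj_on p J"
  shows "x \<in> convc (p ` J) \<longleftrightarrow> (\<exists>c. (\<forall>r\<in>J. 0 \<le> c r) \<and> sum c J = 1 \<and> x = (\<lambda>k. \<Sum>r\<in>J. c r * p r k))"
proof
  assume "x \<in> convc (p`J)"
  then obtain \<mu> where m: "\<forall>t\<in>p`J. 0 \<le> \<mu> t" "sum \<mu> (p`J) = 1" "x = (\<lambda>k. \<Sum>t\<in>p`J. \<mu> t * t k)"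
    by (auto simp: convc_def)
  show "\<exists>c. (\<forall>r\<in>J. 0 \<le> c r) \<and> sum c J = 1 \<and> x = (\<lambda>k. \<Sum>r\<in>J. c r * p r k)"
    apply (rule exI[of _ "\<mu> \<circ> p"])
    using m sum.reindex[OF assms, of \<mu>] sum.reindex[OF assms, of "\<lambda>t. \<mu> t * t k" for k] by auto
next
  assume "\<exists>c. (\<forall>r\<in>J. 0 \<le> c r) \<and> sum c J = 1 \<and> x = (\<lambda>k. \<Sum>r\<in>J. c r * p r k)"
  then obtain c where c: "\<forall>r\<in>J. 0 \<le> c r" "sum c J = 1" "x = (\<lambda>k. \<Sum>r\<in>J. c r * p r k)" by blast
  define \<mu> where "\<mu> t = c (inv_into J p t)" for t
  have e: "\<mu> (p r) = c r" if "r \<in> J" for r using that assms by (simp add: \<mu>_def)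
  have "sum \<mu> (p`J) = sum c J" using sum.reindex[OF assms, of \<mu>] e by auto
  moreover have "(\<Sum>t\<in>p`J. \<mu> t * t k) = (\<Sum>r\<in>J. c r * p r k)" for k
    using sum.reindex[OF assms, of "\<lambda>t. \<mu> t * t k"] e by auto
  moreover have "\<forall>t\<in>p`J. 0 \<le> \<mu> t" using e c by auto
  ultimately show "x \<in> convc (p ` J)" unfolding convc_def using c by auto
qed

lemma aff_intro:
  assumes "finite I" "\<forall>i\<in>I. q i \<in> S" "sum c I = 1"
  shows "(\<lambda>k. \<Sum>i\<in>I. c i * q i k) \<in> affhull S"
proof -
  define \<mu> where "\<mu> t = sum c {i\<in>I. q i = t}" for t
  have "sum \<mu> (q`I) = sum c I" unfolding \<mu>_def by (rule sum.image_gen[symmetric, OF assms(1)])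
  moreover have "(\<Sum>t\<in>q`I. \<mu> t * t k) = (\<Sum>i\<in>I. c i * q i k)" for k
  proof -
    have "(\<Sum>i\<in>I. c i * q i k) = (\<Sum>t\<in>q`I. \<Sum>i\<in>{i\<in>I. q i = t}. c i * q i k)"
      by (rule sum.image_gen[OF assms(1)])
    also have "\<dots> = (\<Sum>t\<in>q`I. \<mu> t * t k)"
      unfolding \<mu>_def sum_distrib_right by (intro sum.cong refl) auto
    finally show ?thesis by simp
  qed
  ultimately show ?thesis unfolding affhull_def using assms by (intro CollectI exI[of _ "q`I"] exI[of _ \<mu>]) auto
qed

lemma inRn_comb: "\<forall>t\<in>T. in_Rn n (q t) \<Longrightarrow> in_Rn n (\<lambda>k. \<Sum>t\<in>T. \<mu> t * q t k)"
  by (simp add: in_Rn_def)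

lemma Mof_carrier[simp]: "Mof n p \<in> carrier_mat (Suc n) (Suc n)" by (simp add: Mof_def)

lemma Mof_dims[simp]: "dim_row (Mof n p) = Suc n" "dim_col (Mof n p) = Suc n" by (simp_all add: Mof_def)

lemma Mof_T_mult: assumes "c < Suc n" "w \<in> carrier_vec (Suc n)"
  shows "((Mof n p)\<^sup>T *\<^sub>v w) $ c = (\<Sum>r<Suc n. bv (p r) c * w $ r)"
  using assms by (auto simp: Mof_def scalar_prod_def atLeast0LessThan intro!: sum.cong)

lemma Mof_mult: assumes "r < Suc n" "w \<in> carrier_vec (Suc n)"
  shows "((Mof n p) *\<^sub>v w) $ r = (\<Sum>c<Suc n. bv (p r) c * w $ c)"
  using assms by (auto simp: Mof_def scalar_prod_def atLeast0LessThan intro!: sum.cong)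

lemma det_Mof_nz:
  assumes inj: "inj_on p {..<Suc n}" and R: "\<forall>r<Suc n. in_Rn n (p r)"
    and ai: "aff_indep (p ` {..<Suc n})"
  shows "Determinant.det (Mof n p) \<noteq> 0"
proof
  assume d0: "Determinant.det (Mof n p) = 0"
  have "Determinant.det ((Mof n p)\<^sup>T) = 0" using det_transpose[OF Mof_carrier] d0 by simp
  then obtain w where w: "w \<in> carrier_vec (Suc n)" "w \<noteq> 0\<^sub>v (Suc n)" "(Mof n p)\<^sup>T *\<^sub>v w = 0\<^sub>v (Suc n)"
    using det_0_iff_vec_prod_zero[of "(Mof n p)\<^sup>T" "Suc n"] by auto
  have comp: "(\<Sum>r<Suc n. bv (p r) c * w $ r) = 0" if "c < Suc n" for c
    using Mof_T_mult[OF that w(1), of p] w(3) that by simp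
  define \<mu> where "\<mu> t = w $ (inv_into {..<Suc n} p t)" for t
  have e: "\<mu> (p r) = w $ r" if "r < Suc n" for r using that inj by (simp add: \<mu>_def)
  have "sum \<mu> (p`{..<Suc n}) = (\<Sum>r<Suc n. w $ r)" using sum.reindex[OF inj, of \<mu>] e by auto
  also have "\<dots> = 0" using comp[of 0] by (simp add: bv_def)
  finally have s0: "sum \<mu> (p`{..<Suc n}) = 0" .
  have "(\<Sum>t\<in>p`{..<Suc n}. \<mu> t * t k) = 0" for k
  proof -
    have "(\<Sum>t\<in>p`{..<Suc n}. \<mu> t * t k) = (\<Sum>r<Suc n. w $ r * p r k)"
      using sum.reindex[OF inj, of "\<lambda>t. \<mu> t * t k"] e by auto
    also have "\<dots> = 0"
    proof (cases "k = 0 \<or> n < k")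
      case True then show ?thesis using R by (auto simp: in_Rn_def)
    next
      case False then show ?thesis using comp[of k] by (auto simp: bv_def mult.commute)
    qed
    finally show ?thesis .
  qed
  then have "\<forall>t\<in>p`{..<Suc n}. \<mu> t = 0" using ai s0 unfolding aff_indep_def by blast
  then have "w $ r = 0" if "r < Suc n" for r using e that by auto
  then have "w = 0\<^sub>v (Suc n)" using w(1) by (intro eq_vecI) auto
  with w(2) show False by simp
qed

lemma bary_unique:
  assumes inj: "inj_on p I" and fin: "finite I" and ai: "aff_indep (p ` I)"
    and s1: "sum c I = 1" and s2: "sum c' I = 1"
    and eq: "(\<lambda>k. \<Sum>r\<in>I. c r * p r k) = (\<lambda>k. \<Sum>r\<in>I. c' r * p r k)" and r: "r \<in> I"
  shows "c r = c' r"
proof -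
  define \<mu> where "\<mu> t = c (inv_into I p t) - c' (inv_into I p t)" for t
  have e: "\<mu> (p r) = c r - c' r" if "r \<in> I" for r using that inj by (simp add: \<mu>_def)
  have "sum \<mu> (p`I) = (\<Sum>r\<in>I. c r - c' r)" using sum.reindex[OF inj, of \<mu>] e by auto
  also have "\<dots> = 0" using s1 s2 by (simp add: sum_subtractf)
  finally have s0: "sum \<mu> (p`I) = 0" .
  have "(\<Sum>t\<in>p`I. \<mu> t * t k) = 0" for k
  proof -
    have "(\<Sum>t\<in>p`I. \<mu> t * t k) = (\<Sum>r\<in>I. (c r - c' r) * p r k)"
      using sum.reindex[OF inj, of "\<lambda>t. \<mu> t * t k"] e by auto
    also have "\<dots> = (\<Sum>r\<in>I. c r * p r k) - (\<Sum>r\<in>I. c' r * p r k)"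
      by (simp add: sum_subtractf left_diff_distrib)
    also have "\<dots> = 0" using fun_cong[OF eq, of k] by simp
    finally show ?thesis .
  qed
  then have "\<forall>t\<in>p`I. \<mu> t = 0" using ai s0 unfolding aff_indep_def by blast
  then show ?thesis using e r by force
qed

lemma bary_exists:
  assumes "Determinant.det (Mof n p) \<noteq> 0" and R: "\<forall>r<Suc n. in_Rn n (p r)"
  obtains A where "\<And>y. in_Rn n y \<Longrightarrow> (\<Sum>r<Suc n. \<Sum>c<Suc n. A r c * bv y c) = 1 \<and>
      y = (\<lambda>k. \<Sum>r<Suc n. (\<Sum>c<Suc n. A r c * bv y c) * p r k)"
proof -
  let ?M = "Mof n p"
  have MT: "?M\<^sup>T \<in> carrier_mat (Suc n) (Suc n)" by simp
  have "Determinant.det (?M\<^sup>T) \<noteq> 0" using det_transpose[OF Mof_carrier] assms by simp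
  from det_non_zero_imp_unit[OF MT this]
  obtain B where B: "B \<in> carrier_mat (Suc n) (Suc n)" "?M\<^sup>T * B = 1\<^sub>m (Suc n)"
    unfolding Units_def ring_mat_def by auto
  have main: "(\<Sum>r<Suc n. \<Sum>c<Suc n. B $$ (r,c) * bv y c) = 1 \<and>
      y = (\<lambda>k. \<Sum>r<Suc n. (\<Sum>c<Suc n. B $$ (r,c) * bv y c) * p r k)" if y: "in_Rn n y" for y
  proof -
    define bb where "bb = Matrix.vec (Suc n) (bv y)"
    have bbc: "bb \<in> carrier_vec (Suc n)" by (simp add: bb_def)
    define l where "l = B *\<^sub>v bb"
    have lc: "l \<in> carrier_vec (Suc n)" unfolding l_def by (rule mult_mat_vec_carrier[OF B(1) bbc])
    have lr: "l $ r = (\<Sum>c<Suc n. B $$ (r,c) * bv y c)" if "r < Suc n" for r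
      using that B by (auto simp: l_def bb_def scalar_prod_def atLeast0LessThan intro!: sum.cong)
    have "?M\<^sup>T *\<^sub>v l = bb"
      unfolding l_def using B bbc by (simp add: assoc_mult_mat_vec[symmetric, of _ "Suc n" "Suc n" _ "Suc n"])
    then have comp: "(\<Sum>r<Suc n. bv (p r) c * l $ r) = bv y c" if "c < Suc n" for c
      using Mof_T_mult[OF that lc, of p] that by (simp add: bb_def)
    have s: "(\<Sum>r<Suc n. \<Sum>c<Suc n. B $$ (r,c) * bv y c) = 1"
      using comp[of 0] lr by (simp add: bv_def)
    have "y k = (\<Sum>r<Suc n. (\<Sum>c<Suc n. B $$ (r,c) * bv y c) * p r k)" for k
    proof (cases "k = 0 \<or> n < k")
      case True
      have "(\<Sum>r<Suc n. (\<Sum>c<Suc n. B $$ (r,c) * bv y c) * p r k) = 0"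
        by (rule sum.neutral) (use R True in \<open>auto simp: in_Rn_def\<close>)
      then show ?thesis using y True by (auto simp: in_Rn_def)
    next
      case False then show ?thesis using comp[of k] lr by (auto simp: bv_def mult.commute)
    qed
    with s show ?thesis by auto
  qed
  show ?thesis by (rule that[of "\<lambda>r c. B $$ (r,c)"]) (use main in auto)
qed

lemma dist_n_nonneg: "0 \<le> dist_n n x y" by (simp add: dist_n_def sum_nonneg)

lemma coord_le_dist: assumes "1 \<le> c" "c \<le> n" shows "\<bar>y c - x c\<bar> \<le> dist_n n x y"
proof -
  have "(x c - y c)^2 \<le> (\<Sum>k=1..n. (x k - y k)^2)"
    by (rule member_le_sum[of c "{1..n}" "\<lambda>k. (x k - y k)^2"]) (use assms in auto)
  then have "sqrt ((x c - y c)^2) \<le> dist_n n x y" unfolding dist_n_def by (rule real_sqrt_le_mono)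
  then show ?thesis by simp
qed

locale cfg =
  fixes n :: nat and p :: "nat \<Rightarrow> pt" and j :: nat
  assumes n1: "1 \<le> n" and inj: "inj_on p {..<Suc n}" and R: "\<forall>r<Suc n. in_Rn n (p r)"
    and ai: "aff_indep (p ` {..<Suc n})" and j: "j < Suc n"
    and knz: "cofactor (Mof n p) j n \<noteq> 0"
begin

definition "D = Determinant.det (Mof n p)"
definition "\<kappa> = cofactor (Mof n p) j n"
definition "G y = (\<Sum>c<Suc n. bv y c * cofactor (Mof n p) j c)"
definition "Mrep y = Matrix.mat (Suc n) (Suc n) (\<lambda>(r,c). if r = j then bv y c else bv (p r) c)"

lemma D_nz: "D \<noteq> 0" unfolding D_def by (rule det_Mof_nz[OF inj R ai])

lemma Mrep_carrier[simp]: "Mrep y \<in> carrier_mat (Suc n) (Suc n)" by (simp add: Mrep_def)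

lemma G_det: "G y = Determinant.det (Mrep y)"
proof -
  have cf: "cofactor (Mrep y) j c = cofactor (Mof n p) j c" for c
    unfolding cofactor_def mat_delete_def
    by (intro arg_cong[where f="\<lambda>A. (-1)^(j+c) * Determinant.det A"] eq_matI)
       (auto simp: Mrep_def Mof_def)
  have "Determinant.det (Mrep y) = (\<Sum>c<Suc n. Mrep y $$ (j,c) * cofactor (Mrep y) j c)"
    by (rule laplace_expansion_row[OF Mrep_carrier j])
  also have "\<dots> = G y" unfolding G_def cf using j by (intro sum.cong refl) (auto simp: Mrep_def)
  finally show ?thesis by simp
qed

lemma G_pj: "G (p j) = D"
proof -
  have "Mrep (p j) = Mof n p" by (intro eq_matI) (auto simp: Mrep_def Mof_def)
  then show ?thesis by (simp add: G_det D_def)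
qed

lemma G_pr: assumes "r < Suc n" "r \<noteq> j" shows "G (p r) = 0"
  unfolding G_det
  by (rule det_identical_rows[OF Mrep_carrier \<open>r \<noteq> j\<close>[symmetric] j assms(1)])
     (use assms j in \<open>auto intro!: eq_vecI simp: Mrep_def\<close>)

lemma G_comb: assumes "finite T" "sum \<mu> T = 1"
  shows "G (\<lambda>k. \<Sum>t\<in>T. \<mu> t * q t k) = (\<Sum>t\<in>T. \<mu> t * G (q t))"
  unfolding G_def by (rule aff_fun[OF assms])

lemma G_shift: assumes "\<forall>k. 1 \<le> k \<and> k < n \<longrightarrow> y k = x k"
  shows "G y - G x = \<kappa> * (y n - x n)"
proof -
  have "G y - G x = (\<Sum>c<Suc n. (bv y c - bv x c) * cofactor (Mof n p) j c)"
    unfolding G_def by (simp add: sum_subtractf left_diff_distrib)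
  also have "\<dots> = (\<Sum>c<n. (bv y c - bv x c) * cofactor (Mof n p) j c) + (y n - x n) * \<kappa>"
    using n1 by (simp add: bv_def \<kappa>_def)
  also have "(\<Sum>c<n. (bv y c - bv x c) * cofactor (Mof n p) j c) = 0"
    by (rule sum.neutral) (use assms in \<open>auto simp: bv_def\<close>)
  finally show ?thesis by simp
qed

lemma G_idx: assumes "sum c {..<Suc n} = 1"
  shows "G (\<lambda>k. \<Sum>r<Suc n. c r * p r k) = c j * D"
proof -
  have "G (\<lambda>k. \<Sum>r<Suc n. c r * p r k) = (\<Sum>r<Suc n. c r * G (p r))"
    by (rule G_comb) (use assms in auto)
  also have "\<dots> = c j * G (p j) + (\<Sum>r\<in>{..<Suc n}-{j}. c r * G (p r))"
    using j by (intro sum.remove) auto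
  also have "(\<Sum>r\<in>{..<Suc n}-{j}. c r * G (p r)) = 0"
    by (rule sum.neutral) (auto simp: G_pr)
  finally show ?thesis by (simp add: G_pj)
qed

definition "P = convc (p ` {..<Suc n})"
definition "F = convc (p ` ({..<Suc n} - {j}))"

lemma inP: "x \<in> P \<longleftrightarrow> (\<exists>c. (\<forall>r\<in>{..<Suc n}. 0 \<le> c r) \<and> sum c {..<Suc n} = 1 \<and>
    x = (\<lambda>k. \<Sum>r\<in>{..<Suc n}. c r * p r k))"
  unfolding P_def by (rule conv_idx[OF inj])

lemma inF: "x \<in> F \<longleftrightarrow> (\<exists>c. (\<forall>r\<in>{..<Suc n}-{j}. 0 \<le> c r) \<and> sum c ({..<Suc n}-{j}) = 1 \<and>
    x = (\<lambda>k. \<Sum>r\<in>{..<Suc n}-{j}. c r * p r k))"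
  unfolding F_def by (rule conv_idx[OF inj_on_subset[OF inj]]) auto

lemma ext_sum: fixes c f :: "nat \<Rightarrow> real" shows "(\<Sum>r\<in>{..<Suc n}. (if r = j then 0 else c r) * f r) = (\<Sum>r\<in>{..<Suc n}-{j}. c r * f r)"
proof -
  have "(\<Sum>r\<in>{..<Suc n}. (if r = j then 0 else c r) * f r) =
      (if j = j then 0 else c j) * f j + (\<Sum>r\<in>{..<Suc n}-{j}. (if r = j then 0 else c r) * f r)"
    using j by (intro sum.remove) auto
  also have "\<dots> = (\<Sum>r\<in>{..<Suc n}-{j}. c r * f r)" by (auto intro!: sum.cong)
  finally show ?thesis by simp
qed

lemma F_P: assumes "x \<in> F" shows "x \<in> P" "G x = 0"
proof -
  obtain c where c: "\<forall>r\<in>{..<Suc n}-{j}. 0 \<le> c r" "sum c ({..<Suc n}-{j}) = 1"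
    "x = (\<lambda>k. \<Sum>r\<in>{..<Suc n}-{j}. c r * p r k)" using assms inF by blast
  define c' where "c' r = (if r = j then 0 else c r)" for r
  have s: "sum c' {..<Suc n} = 1" using ext_sum[of c "\<lambda>_. 1"] c(2) by (simp add: c'_def)
  have x: "x = (\<lambda>k. \<Sum>r\<in>{..<Suc n}. c' r * p r k)"
    using ext_sum[of c "\<lambda>r. p r k" for k] c(3) by (simp add: c'_def)
  have "\<forall>r\<in>{..<Suc n}. 0 \<le> c' r" using c(1) by (auto simp: c'_def)
  then show "x \<in> P" using inP s x by blast
  show "G x = 0" using G_idx[OF s] x by (simp add: c'_def)
qed

lemma P_Rn: assumes "x \<in> P" shows "in_Rn n x"
proof -
  obtain c where "x = (\<lambda>k. \<Sum>r\<in>{..<Suc n}. c r * p r k)" using assms inP by blast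
  then show ?thesis by (subst \<open>x = _\<close>) (rule inRn_comb, use R in auto)
qed

lemma F_Rn: "x \<in> F \<Longrightarrow> in_Rn n x" using F_P P_Rn by blast

lemma vert_F: assumes "r \<in> {..<Suc n}-{j}" shows "p r \<in> F"
proof -
  define c where "c r' = (if r' = r then 1 else 0::real)" for r'
  have "sum c ({..<Suc n}-{j}) = 1" using assms by (simp add: c_def)
  moreover have "p r = (\<lambda>k. \<Sum>r'\<in>{..<Suc n}-{j}. c r' * p r' k)"
  proof
    fix k
    have "(\<Sum>r'\<in>{..<Suc n}-{j}. c r' * p r' k) = (\<Sum>r'\<in>{..<Suc n}-{j}. if r' = r then p r' k else 0)"
      by (intro sum.cong) (auto simp: c_def)
    also have "\<dots> = p r k" using assms by (subst sum.delta) auto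
    finally show "p r k = (\<Sum>r'\<in>{..<Suc n}-{j}. c r' * p r' k)" by simp
  qed
  moreover have "\<forall>r'\<in>{..<Suc n}-{j}. 0 \<le> c r'" by (simp add: c_def)
  ultimately show ?thesis using inF by blast
qed

lemma proj_eq: assumes "proj (n-1) z = proj (n-1) x" shows "\<forall>k. 1 \<le> k \<and> k < n \<longrightarrow> z k = x k"
proof (intro allI impI)
  fix k assume k: "1 \<le> k \<and> k < n"
  have "proj (n-1) z k = proj (n-1) x k" using assms by simp
  then show "z k = x k" using k by (auto simp: proj_def split: if_splits)
qed

lemma key_P: assumes "z \<in> P" "x \<in> F" "proj (n-1) z = proj (n-1) x"
  shows "\<exists>c\<ge>0. \<kappa> * (z n - x n) = c * D"
proof -
  obtain c where c: "\<forall>r\<in>{..<Suc n}. 0 \<le> c r" "sum c {..<Suc n} = 1"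
    "z = (\<lambda>k. \<Sum>r\<in>{..<Suc n}. c r * p r k)" using assms(1) inP by blast
  have "G z = c j * D" using G_idx[OF c(2)] c(3) by simp
  moreover have "G x = 0" using F_P(2)[OF assms(2)] .
  moreover have "G z - G x = \<kappa> * (z n - x n)" by (rule G_shift[OF proj_eq[OF assms(3)]])
  ultimately show ?thesis using c(1) j by (intro exI[of _ "c j"]) auto
qed

lemma sign_aux: assumes "\<kappa> * (a::real) = c * D" "0 \<le> c"
  shows "\<kappa> * D < 0 \<Longrightarrow> a \<le> 0" "\<kappa> * D > 0 \<Longrightarrow> a \<ge> 0"
proof -
  have k2: "\<kappa> * \<kappa> > 0" by (metis knz \<kappa>_def not_real_square_gt_zero)
  have e: "(\<kappa> * \<kappa>) * a = c * (\<kappa> * D)" using assms(1)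
    by (metis mult.assoc mult.left_commute)
  show "\<kappa> * D < 0 \<Longrightarrow> a \<le> 0"
  proof -
    assume "\<kappa> * D < 0"
    then have "c * (\<kappa> * D) \<le> 0" using assms(2) by (simp add: mult_nonneg_nonpos)
    then show "a \<le> 0" using e k2 by (metis linorder_not_le mult_pos_pos)
  qed
  show "\<kappa> * D > 0 \<Longrightarrow> a \<ge> 0"
  proof -
    assume "\<kappa> * D > 0"
    then have "c * (\<kappa> * D) \<ge> 0" using assms(2) by simp
    then show "a \<ge> 0" using e k2 by (metis linorder_not_le mult_pos_neg)
  qed
qed

lemma F_PB: assumes "x \<in> F" "\<kappa> * D < 0" shows "x \<in> PB n P"
  unfolding PB_def using F_P(1)[OF assms(1)] key_P[OF _ assms(1)] sign_aux(1)[OF _ _ assms(2)]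
  by fastforce

lemma F_NB: assumes "x \<in> F" "\<kappa> * D > 0" shows "x \<in> NB n P"
  unfolding NB_def using F_P(1)[OF assms(1)] key_P[OF _ assms(1)] sign_aux(2)[OF _ _ assms(2)]
  by fastforce

lemma relint_exists: "\<exists>x. x \<in> rel_interior_n n F"
proof -
  let ?I = "{..<Suc n}"
  obtain A where A: "\<And>y. in_Rn n y \<Longrightarrow> (\<Sum>r<Suc n. \<Sum>c<Suc n. A r c * bv y c) = 1 \<and>
      y = (\<lambda>k. \<Sum>r<Suc n. (\<Sum>c<Suc n. A r c * bv y c) * p r k)"
    using bary_exists D_nz R unfolding D_def by blast
  define lam where "lam y r = (\<Sum>c<Suc n. A r c * bv y c)" for y r
  have lam1: "sum (lam y) ?I = 1" and lamy: "y = (\<lambda>k. \<Sum>r<Suc n. lam y r * p r k)" if "in_Rn n y" for y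
    using A[OF that] unfolding lam_def by auto
  define cb where "cb r = (if r = j then 0 else 1 / real n)" for r
  have card: "card (?I - {j}) = n" using j by simp
  define xb where "xb = (\<lambda>k. \<Sum>r\<in>?I-{j}. (1 / real n) * p r k)"
  have xbF: "xb \<in> F" unfolding inF xb_def
    by (rule exI[of _ "\<lambda>_. 1 / real n"]) (use card n1 in auto)
  have xbR: "in_Rn n xb" by (rule F_Rn[OF xbF])
  have xb2: "xb = (\<lambda>k. \<Sum>r\<in>?I. cb r * p r k)"
  proof
    fix k
    have "(\<Sum>r\<in>?I. cb r * p r k) = (\<Sum>r\<in>?I-{j}. (1/real n) * p r k)" unfolding cb_def by (rule ext_sum)
    then show "xb k = (\<Sum>r\<in>?I. cb r * p r k)" unfolding xb_def by (simp del: lessThan_Suc)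
  qed
  have cb1: "sum cb ?I = 1" unfolding cb_def using ext_sum[of "\<lambda>_. 1 / real n" "\<lambda>_. 1"] card n1 by simp
  have lamxb: "lam xb r = cb r" if "r \<in> ?I" for r
    by (rule bary_unique[OF inj _ ai lam1[OF xbR] cb1 _ that]) (use lamy[OF xbR] xb2 in auto)
  define Bd where "Bd = 1 + (\<Sum>r<Suc n. \<Sum>c<Suc n. \<bar>A r c\<bar>)"
  have Bd1: "Bd \<ge> 1" unfolding Bd_def by (simp add: sum_nonneg)
  define e where "e = 1 / (real n * Bd)"
  have epos: "e > 0" using Bd1 n1 by (simp add: e_def)
  have "\<forall>y\<in>affhull F. dist_n n xb y < e \<longrightarrow> y \<in> F"
  proof (intro ballI impI)
    fix y assume yA: "y \<in> affhull F" and yd: "dist_n n xb y < e"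
    obtain T \<mu> where T: "finite T" "T \<subseteq> F" "sum \<mu> T = 1" "y = (\<lambda>k. \<Sum>p\<in>T. \<mu> p * p k)"
      using yA unfolding affhull_def by blast
    have yR: "in_Rn n y" using T F_Rn by (auto intro!: inRn_comb)
    have "G y = (\<Sum>t\<in>T. \<mu> t * G t)" using G_comb[OF T(1) T(3), of "\<lambda>t. t"] T(4) by simp
    also have "\<dots> = 0" using T(2) F_P(2) by (auto intro!: sum.neutral)
    finally have Gy: "G y = 0" .
    have "G y = lam y j * D" using G_idx[OF lam1[OF yR]] lamy[OF yR] by simp
    with Gy D_nz have lj: "lam y j = 0" by simp
    have lpos: "lam y r > 0" if r: "r \<in> ?I - {j}" for r
    proof -
      have "\<bar>lam y r - lam xb r\<bar> = \<bar>\<Sum>c<Suc n. A r c * (bv y c - bv xb c)\<bar>"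
        unfolding lam_def by (simp add: sum_subtractf right_diff_distrib)
      also have "\<dots> \<le> (\<Sum>c<Suc n. \<bar>A r c\<bar> * \<bar>bv y c - bv xb c\<bar>)"
        by (rule order.trans[OF sum_abs]) (simp add: abs_mult)
      also have "\<dots> \<le> (\<Sum>c<Suc n. \<bar>A r c\<bar> * dist_n n xb y)"
        by (intro sum_mono mult_left_mono) (auto simp: bv_def coord_le_dist dist_n_nonneg)
      also have "\<dots> = (\<Sum>c<Suc n. \<bar>A r c\<bar>) * dist_n n xb y" by (rule sum_distrib_right[symmetric])
      also have "\<dots> \<le> Bd * dist_n n xb y"
      proof (rule mult_right_mono)
        have "(\<Sum>c<Suc n. \<bar>A r c\<bar>) \<le> (\<Sum>r<Suc n. \<Sum>c<Suc n. \<bar>A r c\<bar>)"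
          by (rule member_le_sum[of r "{..<Suc n}" "\<lambda>r. \<Sum>c<Suc n. \<bar>A r c\<bar>"]) (use r in \<open>auto intro: sum_nonneg\<close>)
        then show "(\<Sum>c<Suc n. \<bar>A r c\<bar>) \<le> Bd" unfolding Bd_def by simp
      qed (simp add: dist_n_nonneg)
      also have "\<dots> < Bd * e" using yd Bd1 by simp
      also have "\<dots> = 1 / real n" using Bd1 n1 by (simp add: e_def)
      finally have "\<bar>lam y r - lam xb r\<bar> < 1 / real n" .
      moreover have "lam xb r = 1 / real n" using lamxb[of r] r by (simp add: cb_def)
      ultimately show ?thesis by linarith
    qed
    have s: "sum (lam y) (?I - {j}) = 1"
      using lam1[OF yR] sum.remove[of ?I j "lam y"] j lj by simp
    have "y = (\<lambda>k. \<Sum>r\<in>?I-{j}. lam y r * p r k)"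
    proof
      fix k
      have "y k = (\<Sum>r\<in>?I. lam y r * p r k)" using fun_cong[OF lamy[OF yR], of k] by simp
      also have "\<dots> = lam y j * p j k + (\<Sum>r\<in>?I-{j}. lam y r * p r k)"
        using j by (intro sum.remove) auto
      finally show "y k = (\<Sum>r\<in>?I-{j}. lam y r * p r k)" using lj by simp
    qed
    moreover have "\<forall>r\<in>?I-{j}. 0 \<le> lam y r" using lpos by (simp add: less_imp_le)
    ultimately show "y \<in> F" unfolding inF using s by blast
  qed
  then have "xb \<in> rel_interior_n n F" unfolding rel_interior_n_def using xbF epos by blast
  then show ?thesis by blast
qed

lemma relint_move:
  assumes "x \<in> rel_interior_n n F"
  shows "\<exists>z\<in>P. proj (n-1) z = proj (n-1) x \<and> (\<exists>\<epsilon>>0. \<kappa> * (z n - x n) = \<epsilon> * D)"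
proof -
  let ?I = "{..<Suc n}"
  obtain e where xF: "x \<in> F" and e: "e > 0" and H: "\<forall>y\<in>affhull F. dist_n n x y < e \<longrightarrow> y \<in> F"
    using assms unfolding rel_interior_n_def by blast
  obtain A where A: "\<And>y. in_Rn n y \<Longrightarrow> (\<Sum>r<Suc n. \<Sum>c<Suc n. A r c * bv y c) = 1 \<and>
      y = (\<lambda>k. \<Sum>r<Suc n. (\<Sum>c<Suc n. A r c * bv y c) * p r k)"
    using bary_exists D_nz R unfolding D_def by blast
  define lam where "lam y r = (\<Sum>c<Suc n. A r c * bv y c)" for y r
  have lam1: "sum (lam y) ?I = 1" and lamy: "y = (\<lambda>k. \<Sum>r<Suc n. lam y r * p r k)" if "in_Rn n y" for y
    using A[OF that] unfolding lam_def by auto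
  have kz: "\<kappa> \<noteq> 0" using knz by (simp add: \<kappa>_def)
  define t where "t = - D / \<kappa>"
  define q where "q = (\<lambda>k. p j k + (if k = n then t else 0))"
  have qR: "in_Rn n q" using R j n1 by (auto simp: q_def in_Rn_def)
  have qk: "q k = p j k" if "k \<noteq> n" for k using that by (simp add: q_def)
  have "G q - G (p j) = \<kappa> * (q n - p j n)" by (rule G_shift) (auto simp: q_def)
  then have Gq: "G q = 0" using kz by (simp add: G_pj q_def t_def)
  have "G q = lam q j * D" using G_idx[OF lam1[OF qR]] lamy[OF qR] by simp
  with Gq D_nz have lqj: "lam q j = 0" by simp
  have sq: "sum (lam q) (?I - {j}) = 1" using lam1[OF qR] sum.remove[of ?I j "lam q"] j lqj by simp
  have qsum: "q k = (\<Sum>r\<in>?I-{j}. lam q r * p r k)" for k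
  proof -
    have "q k = (\<Sum>r\<in>?I. lam q r * p r k)" using fun_cong[OF lamy[OF qR], of k] by simp
    also have "\<dots> = lam q j * p j k + (\<Sum>r\<in>?I-{j}. lam q r * p r k)"
      using j by (intro sum.remove) auto
    finally show ?thesis using lqj by simp
  qed
  define Dq where "Dq = dist_n n x q"
  have Dq0: "Dq \<ge> 0" by (simp add: Dq_def dist_n_nonneg)
  define \<epsilon> where "\<epsilon> = min (1/2) (e / (4 * (Dq + 1)))"
  have ep1: "\<epsilon> > 0" using e Dq0 unfolding \<epsilon>_def by simp
  have ep2: "\<epsilon> \<le> 1/2" unfolding \<epsilon>_def by (rule min.cobounded1)
  have ep3: "\<epsilon> \<le> e / (4 * (Dq + 1))" unfolding \<epsilon>_def by (rule min.cobounded2)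
  note ep = ep1 ep2 ep3
  have e1: "1 - \<epsilon> > 0" using ep by simp
  define x' where "x' = (\<lambda>k. (1/(1-\<epsilon>)) * x k + (- \<epsilon>/(1-\<epsilon>)) * q k)"
  have x'A: "x' \<in> affhull F"
  proof -
    define J where "J = insert (Suc n) (?I - {j})"
    define qq where "qq i = (if i = Suc n then x else p i)" for i
    define cc where "cc i = (if i = Suc n then 1/(1-\<epsilon>) else (- \<epsilon>/(1-\<epsilon>)) * lam q i)" for i
    have nin: "Suc n \<notin> ?I - {j}" by simp
    have "sum cc J = 1/(1-\<epsilon>) + (- \<epsilon>/(1-\<epsilon>)) * sum (lam q) (?I - {j})"
      unfolding J_def using nin by (simp add: sum.insert cc_def sum_distrib_left)
    also have "\<dots> = 1" using sq e1 by (simp add: field_simps)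
    finally have s1: "sum cc J = 1" .
    have "(\<lambda>k. \<Sum>i\<in>J. cc i * qq i k) = x'"
    proof
      fix k
      have a1: "(\<Sum>i\<in>J. cc i * qq i k) = cc (Suc n) * qq (Suc n) k + (\<Sum>i\<in>?I-{j}. cc i * qq i k)"
        unfolding J_def by (rule sum.insert) auto
      have a2: "(\<Sum>i\<in>?I-{j}. cc i * qq i k) = (\<Sum>i\<in>?I-{j}. (- \<epsilon>/(1-\<epsilon>)) * (lam q i * p i k))"
        by (intro sum.cong) (auto simp: cc_def qq_def)
      have a3: "(\<Sum>i\<in>?I-{j}. (- \<epsilon>/(1-\<epsilon>)) * (lam q i * p i k)) = (- \<epsilon>/(1-\<epsilon>)) * q k"
        by (subst qsum[of k]) (rule sum_distrib_left[symmetric])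
      have a4: "cc (Suc n) * qq (Suc n) k = 1/(1-\<epsilon>) * x k" by (simp add: cc_def qq_def)
      show "(\<Sum>i\<in>J. cc i * qq i k) = x' k" unfolding a1 a2 a3 a4 by (simp add: x'_def)
    qed
    moreover have "(\<lambda>k. \<Sum>i\<in>J. cc i * qq i k) \<in> affhull F"
      by (rule aff_intro[OF _ _ s1]) (auto simp: J_def qq_def xF intro: vert_F)
    ultimately show ?thesis by simp
  qed
  have ne: "1 - \<epsilon> \<noteq> 0" using e1 by simp
  have x'k: "(1-\<epsilon>) * x' k = x k - \<epsilon> * q k" for k
  proof -
    have "(1-\<epsilon>) * x' k = ((1-\<epsilon>) * (1/(1-\<epsilon>))) * x k + ((1-\<epsilon>) * (-\<epsilon>/(1-\<epsilon>))) * q k"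
      unfolding x'_def by (simp only: distrib_left mult.assoc)
    also have "(1-\<epsilon>) * (1/(1-\<epsilon>)) = 1" using ne by simp
    also have "(1-\<epsilon>) * (-\<epsilon>/(1-\<epsilon>)) = -\<epsilon>" using ne by simp
    finally show ?thesis by simp
  qed
  have diff: "x k - x' k = (\<epsilon>/(1-\<epsilon>)) * (x k - q k) * (-1)" for k
  proof -
    have "(x k - x' k) * (1-\<epsilon>) = \<epsilon> * (q k - x k)" using x'k[of k] by (simp add: algebra_simps)
    then have "x k - x' k = \<epsilon> * (q k - x k) / (1-\<epsilon>)" using ne by (simp add: eq_divide_eq)
    then show ?thesis by (simp add: algebra_simps)
  qed
  have "dist_n n x x' = sqrt (\<Sum>k=1..n. ((\<epsilon>/(1-\<epsilon>))^2) * (x k - q k)^2)"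
  proof -
    have sq: "(a * b * (-1))^2 = a^2 * b^2" for a b :: real by (simp add: power_mult_distrib)
    show ?thesis unfolding dist_n_def diff sq ..
  qed
  also have "\<dots> = (\<epsilon>/(1-\<epsilon>)) * Dq"
    unfolding Dq_def dist_n_def using ep e1 by (simp add: sum_distrib_left[symmetric] real_sqrt_mult)
  also have "\<dots> \<le> (2 * \<epsilon>) * Dq"
  proof (rule mult_right_mono[OF _ Dq0])
    show "\<epsilon>/(1-\<epsilon>) \<le> 2 * \<epsilon>" using ep e1 by (simp add: field_simps)
  qed
  also have "\<dots> \<le> 2 * (e / (4 * (Dq + 1))) * Dq" using ep Dq0 by (intro mult_right_mono) auto
  also have "\<dots> < e"
  proof -
    have "2 * (e / (4 * (Dq + 1))) * Dq = (e/2) * (Dq / (Dq + 1))" using Dq0 by (simp add: field_simps)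
    also have "\<dots> < (e/2) * 1"
      by (rule mult_strict_left_mono) (use e Dq0 in auto)
    also have "\<dots> < e" using e by simp
    finally show ?thesis .
  qed
  finally have "dist_n n x x' < e" .
  with H x'A have x'F: "x' \<in> F" by blast
  obtain c where c: "\<forall>r\<in>?I-{j}. 0 \<le> c r" "sum c (?I-{j}) = 1" "x' = (\<lambda>k. \<Sum>r\<in>?I-{j}. c r * p r k)"
    using x'F inF by blast
  define z where "z = (\<lambda>k. \<epsilon> * p j k + (1-\<epsilon>) * x' k)"
  define cz where "cz r = (if r = j then \<epsilon> else (1-\<epsilon>) * c r)" for r
  have czs: "sum cz ?I = 1"
  proof -
    have b1: "sum cz ?I = cz j + sum cz (?I - {j})" using j by (intro sum.remove) auto
    have b2: "sum cz (?I - {j}) = (1-\<epsilon>) * sum c (?I - {j})"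
      unfolding sum_distrib_left by (intro sum.cong) (auto simp: cz_def)
    show ?thesis unfolding b1 b2 c(2) by (simp add: cz_def)
  qed
  have zc: "z = (\<lambda>k. \<Sum>r\<in>?I. cz r * p r k)"
  proof
    fix k
    have b1: "(\<Sum>r\<in>?I. cz r * p r k) = cz j * p j k + (\<Sum>r\<in>?I-{j}. cz r * p r k)"
      using j by (intro sum.remove) auto
    have b2: "(\<Sum>r\<in>?I-{j}. cz r * p r k) = (1-\<epsilon>) * x' k"
      unfolding c(3) sum_distrib_left by (intro sum.cong) (auto simp: cz_def)
    show "z k = (\<Sum>r\<in>?I. cz r * p r k)" unfolding b1 b2 by (simp add: z_def cz_def)
  qed
  have czn: "\<forall>r\<in>?I. 0 \<le> cz r" using c(1) ep e1 by (auto simp: cz_def)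
  have zP: "z \<in> P" unfolding inP using czs zc czn by blast
  have Gz: "G z = \<epsilon> * D" using G_idx[OF czs] zc by (simp add: cz_def)
  have zx: "z k = x k" if "k \<noteq> n" for k
  proof -
    have "(1-\<epsilon>) * x' k = x k - \<epsilon> * q k" by (rule x'k)
    then show ?thesis using qk[OF that] by (simp add: z_def)
  qed
  have pr: "proj (n-1) z = proj (n-1) x"
    unfolding proj_def using zx n1 by (auto intro!: ext)
  have "G z - G x = \<kappa> * (z n - x n)" by (rule G_shift) (use zx in auto)
  then have "\<kappa> * (z n - x n) = \<epsilon> * D" using Gz F_P(2)[OF xF] by simp
  then show ?thesis using zP pr ep(1) by blast
qed

lemma facet_sign: "facet_sign_is n P F (- sgn (\<kappa> * D))"
proof -
  have kz: "\<kappa> \<noteq> 0" using knz by (simp add: \<kappa>_def)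
  have k2: "\<kappa> * \<kappa> > 0" by (metis knz \<kappa>_def not_real_square_gt_zero)
  obtain x0 where x0: "x0 \<in> rel_interior_n n F" using relint_exists by blast
  have x0F: "x0 \<in> F" using x0 unfolding rel_interior_n_def by blast
  have strict: "\<kappa> * \<kappa> * a = b * (\<kappa> * D)" if "\<kappa> * a = b * D" for a b :: real
    using that by (metis mult.assoc mult.left_commute)
  show ?thesis
  proof (cases "\<kappa> * D < 0")
    case True
    have pos: "positive_facet n P F" unfolding positive_facet_def using x0 F_PB[OF x0F True] by blast
    have neg: "\<not> negative_facet n P F"
    proof
      assume "negative_facet n P F"
      then obtain x where x: "x \<in> rel_interior_n n F" "x \<in> NB n P" unfolding negative_facet_def by blast
      obtain z \<epsilon> where z: "z \<in> P" "proj (n-1) z = proj (n-1) x" "\<epsilon> > 0" "\<kappa> * (z n - x n) = \<epsilon> * D"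
        using relint_move[OF x(1)] by blast
      have "\<epsilon> * (\<kappa> * D) < 0" using z(3) True by (simp add: mult_pos_neg)
      moreover have "\<kappa> * \<kappa> * (z n - x n) = \<epsilon> * (\<kappa> * D)" by (rule strict[OF z(4)])
      ultimately have "\<kappa> * \<kappa> * (z n - x n) < 0" by linarith
      then have "z n - x n < 0" using k2 by (auto simp: mult_less_0_iff)
      then have "z n < x n" by simp
      moreover have "x n \<le> z n" using x(2) z(1,2) unfolding NB_def by auto
      ultimately show False by simp
    qed
    show ?thesis unfolding facet_sign_is_def using True pos neg kz D_nz by (simp add: sgn_if)
  next
    case False
    have "\<kappa> * D \<noteq> 0" using kz D_nz by simp
    with False have True': "\<kappa> * D > 0" by linarith
    have neg: "negative_facet n P F" unfolding negative_facet_def using x0 F_NB[OF x0F True'] by blast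
    have pos: "\<not> positive_facet n P F"
    proof
      assume "positive_facet n P F"
      then obtain x where x: "x \<in> rel_interior_n n F" "x \<in> PB n P" unfolding positive_facet_def by blast
      obtain z \<epsilon> where z: "z \<in> P" "proj (n-1) z = proj (n-1) x" "\<epsilon> > 0" "\<kappa> * (z n - x n) = \<epsilon> * D"
        using relint_move[OF x(1)] by blast
      have "\<epsilon> * (\<kappa> * D) > 0" using z(3) True' by simp
      moreover have "\<kappa> * \<kappa> * (z n - x n) = \<epsilon> * (\<kappa> * D)" by (rule strict[OF z(4)])
      ultimately have "\<kappa> * \<kappa> * (z n - x n) > 0" by linarith
      then have "z n - x n > 0" using k2 by (auto simp: zero_less_mult_iff)
      then have "z n > x n" by simp
      moreover have "z n \<le> x n" using x(2) z(1,2) unfolding PB_def by auto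
      ultimately show False by simp
    qed
    show ?thesis unfolding facet_sign_is_def using True' pos neg kz D_nz by (simp add: sgn_if)
  qed
qed

end

lemma kappa_nz:
  assumes n1: "1 \<le> n" and inj: "inj_on p {..<Suc n}" and j: "j < Suc n"
    and gp: "is_simplex (n-1) (proj (n-1) ` convc (p ` ({..<Suc n} - {j})))"
  shows "Determinant.det (mat_delete (Mof n p) j n) \<noteq> 0"
proof
  obtain m where nm: "n = Suc m" using n1 by (cases n) auto
  let ?U = "p ` ({..<Suc n} - {j})"
  let ?Md = "mat_delete (Mof n p) j n"
  have Mdc: "?Md \<in> carrier_mat n n" using mat_delete_carrier[OF Mof_carrier[of n p], of j n] by simp
  assume "Determinant.det ?Md = 0"
  then obtain a where a: "a \<in> carrier_vec n" "a \<noteq> 0\<^sub>v n" "?Md *\<^sub>v a = 0\<^sub>v n"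
    using det_0_iff_vec_prod_zero[OF Mdc] by auto
  define h where "h y = (\<Sum>c<n. bv y c * a $ c)" for y
  have hp: "h (p r) = 0" if r: "r \<in> {..<Suc n} - {j}" for r
  proof -
    define r' where "r' = (if r < j then r else r - 1)"
    have r'n: "r' < n" using r j by (auto simp: r'_def)
    have idx: "(if r' < j then r' else Suc r') = r" using r by (auto simp: r'_def)
    have "(?Md *\<^sub>v a) $ r' = 0" using a(3) r'n by simp
    moreover have "(?Md *\<^sub>v a) $ r' = (\<Sum>c<n. ?Md $$ (r',c) * a $ c)"
    proof -
      have "(?Md *\<^sub>v a) $ r' = row ?Md r' \<bullet> a" by (rule index_mult_mat_vec) (use Mdc r'n in simp)
      also have "\<dots> = (\<Sum>c<n. ?Md $$ (r',c) * a $ c)"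
        unfolding scalar_prod_def using Mdc a(1) r'n by (auto simp: atLeast0LessThan intro!: sum.cong)
      finally show ?thesis .
    qed
    moreover have "?Md $$ (r',c) = bv (p r) c" if "c < n" for c
      using that r'n idx by (auto simp: mat_delete_def Mof_def)
    ultimately show ?thesis unfolding h_def by simp
  qed
  obtain W where W: "finite W" "card W = n - 1 + 1" "\<forall>w\<in>W. in_Rn (n-1) w" "aff_indep W"
    "proj (n-1) ` convc ?U = convc W" using gp unfolding is_simplex_def by blast
  have hproj: "h (proj (n-1) y) = h y" for y
    unfolding h_def by (intro sum.cong refl) (auto simp: bv_def proj_def)
  have hW: "h w = 0" if w: "w \<in> W" for w
  proof -
    define \<mu> where "\<mu> t = (if t = w then 1 else 0::real)" for t
    have "sum \<mu> W = 1" using W(1) w by (simp add: \<mu>_def)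
    moreover have "w = (\<lambda>k. \<Sum>t\<in>W. \<mu> t * t k)"
    proof
      fix k
      have "(\<Sum>t\<in>W. \<mu> t * t k) = (\<Sum>t\<in>W. if t = w then t k else 0)"
        by (intro sum.cong) (auto simp: \<mu>_def)
      also have "\<dots> = w k" using W(1) w by (subst sum.delta) auto
      finally show "w k = (\<Sum>t\<in>W. \<mu> t * t k)" by simp
    qed
    moreover have "\<forall>t\<in>W. 0 \<le> \<mu> t" by (simp add: \<mu>_def)
    ultimately have "w \<in> convc W" unfolding convc_def by blast
    then obtain y where y: "y \<in> convc ?U" "w = proj (n-1) y" using W(5) by blast
    then obtain \<nu> where \<nu>: "sum \<nu> ?U = 1" "y = (\<lambda>k. \<Sum>t\<in>?U. \<nu> t * t k)"
      unfolding convc_def by blast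
    have "h y = (\<Sum>t\<in>?U. \<nu> t * h t)" unfolding h_def \<nu>(2) by (rule aff_fun[OF _ \<nu>(1)]) simp
    also have "\<dots> = 0" using hp by (intro sum.neutral) auto
    finally show ?thesis using y(2) hproj by simp
  qed
  have "card W = n" using W(2) n1 by simp
  then obtain f where f: "bij_betw f {0..<n} W" using ex_bij_betw_nat_finite[OF W(1)] by metis
  have f': "bij_betw f {..<Suc m} W" using f nm by (simp add: atLeast0LessThan)
  have finj: "inj_on f {..<Suc m}" and fim: "f ` {..<Suc m} = W"
    using f' by (auto simp: bij_betw_def)
  have fR: "\<forall>r<Suc m. in_Rn m (f r)" using W(3) fim nm by auto
  have fai: "aff_indep (f ` {..<Suc m})" using W(4) fim by simp
  have dnz: "Determinant.det (Mof m f) \<noteq> 0" by (rule det_Mof_nz[OF finj fR fai])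
  have "Mof m f *\<^sub>v a = 0\<^sub>v (Suc m)"
  proof (rule eq_vecI)
    fix r assume r: "r < dim_vec (0\<^sub>v (Suc m) :: real vec)"
    then have rr: "r < Suc m" by simp
    have "(Mof m f *\<^sub>v a) $ r = (\<Sum>c<Suc m. bv (f r) c * a $ c)"
      by (rule Mof_mult[OF rr]) (use a(1) nm in simp)
    also have "\<dots> = h (f r)" unfolding h_def nm ..
    also have "\<dots> = 0" using hW fim rr by auto
    finally show "(Mof m f *\<^sub>v a) $ r = 0\<^sub>v (Suc m) $ r" using rr by simp
  qed (simp add: Mof_def)
  then have "Determinant.det (Mof m f) = 0"
    using det_0_iff_vec_prod_zero[OF Mof_carrier[of m f]] a(1,2) nm by auto
  with dnz show False by simp
qed

lemma sgn_div_mult: "sgn ((a::real) / b) = sgn (a * b)"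
  unfolding sgn_divide sgn_mult by (auto simp: sgn_if)

lemma main_setup:
  assumes d2: "2 \<le> d" and sim: "is_d_simplex d v" and gp: "general_position d v"
    and \<sigma>: "\<sigma> permutes {1..d}" and j: "j < Suc d"
    and qi_def: "qi = (\<lambda>r. if r < d then \<sigma> (r+1) else d+1)"
    and p_def: "p = (\<lambda>r. v (qi r))"
  shows "facet_sign_is d (simplexP d v) (facet d v (qi j))
           (- sgn (cofactor (Mof d p) j d * detX d v \<sigma> d))"
    and "Mof d p = Matrix.mat (Suc d) (Suc d) (\<lambda>(r,c). Xmat d v \<sigma> d r c)"
proof -
  let ?I = "{..<Suc d}"
  have vR: "\<forall>i\<in>{1..d+1}. in_Rn d (v i)" and vinj: "inj_on v {1..d+1}"
    and vai: "aff_indep (vertices d v)" using sim unfolding is_d_simplex_def by auto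
  have sinj: "inj \<sigma>" using \<sigma> by (rule permutes_inj)
  have sim1: "\<sigma> ` {1..d} = {1..d}" using \<sigma> by (rule permutes_image)
  have A: "\<sigma> (k+1) \<in> {1..d}" if "k < d" for k
  proof -
    have "k+1 \<in> {1..d}" using that by auto
    then show ?thesis using sim1 by blast
  qed
  have qbij: "bij_betw qi ?I {1..d+1}"
  proof (rule bij_betw_imageI)
    show "inj_on qi ?I"
    proof (rule inj_onI)
      fix r r' assume r: "r \<in> ?I" "r' \<in> ?I" and e: "qi r = qi r'"
      show "r = r'" using e r A[of r] A[of r'] sinj[THEN injD, of "r+1" "r'+1"]
        by (auto simp: qi_def split: if_splits)
    qed
    show "qi ` ?I = {1..d+1}"
    proof
      show "qi ` ?I \<subseteq> {1..d+1}" using A by (force simp: qi_def)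
      show "{1..d+1} \<subseteq> qi ` ?I"
      proof
        fix i assume i: "i \<in> {1..d+1}"
        show "i \<in> qi ` ?I"
        proof (cases "i = d+1")
          case True then show ?thesis by (intro image_eqI[of _ _ d]) (auto simp: qi_def)
        next
          case False
          then have "i \<in> \<sigma> ` {1..d}" using i sim1 by auto
          then obtain k where k: "k \<in> {1..d}" "i = \<sigma> k" by auto
          then show ?thesis by (intro image_eqI[of _ _ "k - 1"]) (auto simp: qi_def)
        qed
      qed
    qed
  qed
  have qinj: "inj_on qi ?I" and qim: "qi ` ?I = {1..d+1}" using qbij by (auto simp: bij_betw_def)
  have pim: "p ` ?I = vertices d v" unfolding p_def vertices_def using qim by (simp add: image_image[symmetric])
  have pinj: "inj_on p ?I"
  proof -
    have "inj_on (v \<circ> qi) ?I" by (rule comp_inj_on[OF qinj]) (use vinj qim in simp)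
    then show ?thesis unfolding p_def by (simp add: comp_def)
  qed
  have pR: "\<forall>r<Suc d. in_Rn d (p r)" using vR qim unfolding p_def by auto
  have pai: "aff_indep (p ` ?I)" using vai pim by simp
  have pimj: "p ` (?I - {j}) = v ` ({1..d+1} - {qi j})"
  proof -
    have "qi ` (?I - {j}) = {1..d+1} - {qi j}" using qinj qim j by (simp add: inj_on_image_set_diff)
    then show ?thesis unfolding p_def by (simp add: image_image[symmetric])
  qed
  have cardU: "card (p ` (?I - {j})) = d - 1 + 1"
    using j d2 card_image[OF inj_on_subset[OF pinj, of "?I - {j}"]] by auto
  have Usub: "p ` (?I - {j}) \<subseteq> vertices d v" using pim by auto
  have gpU: "is_simplex (d-1) (proj (d-1) ` convc (p ` (?I - {j})))"
    using gp Usub cardU d2 unfolding general_position_def by auto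
  have knz: "cofactor (Mof d p) j d \<noteq> 0"
    using kappa_nz[OF _ pinj j gpU] d2 by (simp add: cofactor_def)
  interpret C: cfg d p j using d2 pinj pR pai j knz by unfold_locales auto
  show M: "Mof d p = Matrix.mat (Suc d) (Suc d) (\<lambda>(r,c). Xmat d v \<sigma> d r c)"
    by (rule eq_matI) (auto simp: Mof_def Xmat_def bv_def p_def qi_def)
  have D: "C.D = detX d v \<sigma> d" unfolding C.D_def detX_def detn_det M by simp
  have "facet_sign_is d C.P C.F (- sgn (C.\<kappa> * C.D))" by (rule C.facet_sign)
  moreover have "C.P = simplexP d v" unfolding C.P_def simplexP_def pim ..
  moreover have "C.F = facet d v (qi j)" unfolding C.F_def facet_def pimj ..
  ultimately show "facet_sign_is d (simplexP d v) (facet d v (qi j))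
           (- sgn (cofactor (Mof d p) j d * detX d v \<sigma> d))" unfolding C.\<kappa>_def D by simp
qed

theorem mainTheorem7:
  fixes d :: nat and v :: "nat \<Rightarrow> pt"
  assumes "2 \<le> d"
    and "is_d_simplex d v"
    and "general_position d v"
  shows "(\<forall>i\<in>{1..d}. \<forall>\<sigma>. \<sigma> permutes {1..d} \<and> \<sigma> d = i \<longrightarrow>
            facet_sign_is d (simplexP d v) (facet d v i)
              (sgn (detX d v \<sigma> d / detX d v \<sigma> (d - 1))))
       \<and> (\<forall>\<sigma>. \<sigma> permutes {1..d} \<longrightarrow>
            facet_sign_is d (simplexP d v) (facet d v (d + 1))
              (- sgn (detX d v \<sigma> d / detY v \<sigma> d))
            \<and> - sgn (detX d v \<sigma> d / detY v \<sigma> d) = - sgn (zval d v \<sigma> d))"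
proof (intro conjI ballI allI impI)
  fix i \<sigma> assume i: "i \<in> {1..d}" and h: "\<sigma> permutes {1..d} \<and> \<sigma> d = i"
  define qi where "qi = (\<lambda>r. if r < d then \<sigma> (r+1) else d+1)"
  define p where "p = (\<lambda>r. v (qi r))"
  have j: "d - 1 < Suc d" by simp
  note S = main_setup[OF assms h[THEN conjunct1] j qi_def p_def]
  have qj: "qi (d-1) = i" using h assms(1) by (simp add: qi_def)
  have md: "mat_delete (Mof d p) (d-1) d = Matrix.mat d d (\<lambda>(r,c). Xmat d v \<sigma> (d-1) r c)"
    by (rule eq_matI) (auto simp: mat_delete_def Xmat_def Mof_def bv_def p_def qi_def)
  have odd: "odd (d - 1 + d)" using assms(1) by presburger
  have "cofactor (Mof d p) (d-1) d = - detX d v \<sigma> (d-1)"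
    unfolding cofactor_def md detX_def detn_det using assms(1) odd by simp
  then show "facet_sign_is d (simplexP d v) (facet d v i) (sgn (detX d v \<sigma> d / detX d v \<sigma> (d - 1)))"
    using S(1) qj by (simp add: sgn_div_mult sgn_mult mult.commute)
next
  fix \<sigma> assume h: "\<sigma> permutes {1..d}"
  define qi where "qi = (\<lambda>r. if r < d then \<sigma> (r+1) else d+1)"
  define p where "p = (\<lambda>r. v (qi r))"
  have j: "d < Suc d" by simp
  note S = main_setup[OF assms h j qi_def p_def]
  have qj: "qi d = d + 1" by (simp add: qi_def)
  have md: "mat_delete (Mof d p) d d = Matrix.mat d d (\<lambda>(r,c). Ymat v \<sigma> r c)"
    unfolding S(2) by (rule eq_matI) (auto simp: mat_delete_def Xmat_def Ymat_def)
  have "cofactor (Mof d p) d d = detY v \<sigma> d"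
    unfolding cofactor_def md detY_def detn_det by simp
  then show "facet_sign_is d (simplexP d v) (facet d v (d + 1)) (- sgn (detX d v \<sigma> d / detY v \<sigma> d))"
    using S(1) qj by (simp add: sgn_div_mult sgn_mult mult.commute)
  show "- sgn (detX d v \<sigma> d / detY v \<sigma> d) = - sgn (zval d v \<sigma> d)" by (simp add: zval_def)
qed

end
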